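(* Let $(\mathsf X_1,\mathsf X_2)\sim p(x_1,x_2)$ be a pair of random variables on finite alphabets and let \[ M_1=\max_{\mathsf X_1-\mathsf U-\mathsf X_2}\tfrac12\min\{H(\mathsf X_1|\mathsf U),H(\mathsf X_2|\mathsf U)\}, \] the maximum being over auxiliary random variables $\mathsf U$ (given by $p(u|x_1,x_2)$) such that $\mathsf X_1-\mathsf U-\mathsf X_2$ is a Markov chain. Then for every $M\in[0,M_1]\cup[H(\mathsf X_1,\mathsf X_2)-2M_1,\,H(\mathsf X_1,\mathsf X_2)]$ we have $R^{LB}_{GW}(M)=R^{LB}(M)$, where \[ R^{LB}(M)=\inf\Big\{R:\; R\ge H(\mathsf X_1,\mathsf X_2)-2M,\; R\ge \tfrac12\big(H(\mathsf X_1,\mathsf X_2)-M\big),\; R\ge \tfrac12\big(H(\mathsf X_1,\mathsf X_2)+\max\{H(\mathsf X_1),H(\mathsf X_2)\}\big)-M\Big\}, \] and $R^{LB}_{GW}(M)=\inf_{\mathsf U}R^{LB}_{GW}(M,\mathsf U)$, the infimum over all conditional pmfs $p(u|x_1,x_2)$ with $|\mathcal U|\le|\mathcal X_1|\cdot|\mathcal X_2|+2$, with \[ \begin{aligned} R^{LB}_{GW}(M,\mathsf U)=\inf\Big\{R:\;& R\ge I(\mathsf X_1,\mathsf X_2;\mathsf U)+H(\mathsf X_1|\mathsf U)+H(\mathsf X_2|\mathsf U)-2M,\\ & R\ge \tfrac12\big(I(\mathsf X_1,\mathsf X_2;\mathsf U)+H(\mathsf X_1|\mathsf U)+H(\mathsf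 X_2|\mathsf U)-M\big),\\ & R\ge I(\mathsf X_1,\mathsf X_2;\mathsf U)+H(\mathsf X_1|\mathsf U)+\tfrac12H(\mathsf X_2|\mathsf U)-M,\\ & R\ge I(\mathsf X_1,\mathsf X_2;\mathsf U)+\tfrac12H(\mathsf X_1|\mathsf U)+H(\mathsf X_2|\mathsf U)-M\Big\}. \end{aligned} \]
   Context: $R^{LB}(M)$ is a lower bound on the optimal peak rate-memory function of a two-receiver, two-file broadcast caching network with files generated by the 2-DMS $(\mathsf X_1,\mathsf X_2)$ and per-receiver (normalized) cache capacity $M$, and $R^{LB}_{GW}(M)$ is a lower bound on the corresponding function restricted to Gray-Wyner based two-step schemes; for the statement only their explicit formulas above matter. Entropies and mutual information are the standard Shannon quantities. *)

theory Defs
  imports Complex_Main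
begin

definition ent :: "('c \<Rightarrow> real) \<Rightarrow> 'c set \<Rightarrow> real" where
  "ent f S = - (\<Sum>s\<in>S. (if f s = 0 then 0 else f s * log 2 (f s)))"

definition is_pmf2 :: "('a::finite \<times> 'b::finite \<Rightarrow> real) \<Rightarrow> bool" where
  "is_pmf2 p \<longleftrightarrow> (\<forall>z. 0 \<le> p z) \<and> (\<Sum>z\<in>UNIV. p z) = 1"

definition is_cond_pmf :: "nat \<Rightarrow> ('a \<Rightarrow> 'b \<Rightarrow> nat \<Rightarrow> real) \<Rightarrow> bool" where
  "is_cond_pmf K q \<longleftrightarrow> (\<forall>x1 x2 u. 0 \<le> q x1 x2 u) \<and>
     (\<forall>x1 x2. (\<Sum>u<K. q x1 x2 u) = 1)"

definition pJ :: "('a \<times> 'b \<Rightarrow> real) \<Rightarrow> ('a \<Rightarrow> 'b \<Rightarrow> nat \<Rightarrow> real) \<Rightarrow> 'a \<times> 'b \<times> nat \<Rightarrow> real" where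
  "pJ p q = (\<lambda>(x1, x2, u). p (x1, x2) * q x1 x2 u)"

definition pX1 :: "('a \<times> 'b::finite \<Rightarrow> real) \<Rightarrow> 'a \<Rightarrow> real" where
  "pX1 p x1 = (\<Sum>x2\<in>UNIV. p (x1, x2))"

definition pX2 :: "('a::finite \<times> 'b \<Rightarrow> real) \<Rightarrow> 'b \<Rightarrow> real" where
  "pX2 p x2 = (\<Sum>x1\<in>UNIV. p (x1, x2))"

definition pU :: "('a::finite \<times> 'b::finite \<Rightarrow> real) \<Rightarrow> ('a \<Rightarrow> 'b \<Rightarrow> nat \<Rightarrow> real) \<Rightarrow> nat \<Rightarrow> real" where
  "pU p q u = (\<Sum>x1\<in>UNIV. \<Sum>x2\<in>UNIV. pJ p q (x1, x2, u))"

definition pX1U :: "('a \<times> 'b::finite \<Rightarrow> real) \<Rightarrow> ('a \<Rightarrow> 'b \<Rightarrow> nat \<Rightarrow> real) \<Rightarrow> 'a \<times> nat \<Rightarrow> real" where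
  "pX1U p q = (\<lambda>(x1, u). \<Sum>x2\<in>UNIV. pJ p q (x1, x2, u))"

definition pX2U :: "('a::finite \<times> 'b \<Rightarrow> real) \<Rightarrow> ('a \<Rightarrow> 'b \<Rightarrow> nat \<Rightarrow> real) \<Rightarrow> 'b \<times> nat \<Rightarrow> real" where
  "pX2U p q = (\<lambda>(x2, u). \<Sum>x1\<in>UNIV. pJ p q (x1, x2, u))"

definition H12 :: "('a::finite \<times> 'b::finite \<Rightarrow> real) \<Rightarrow> real" where
  "H12 p = ent p UNIV"
definition H1 :: "('a::finite \<times> 'b::finite \<Rightarrow> real) \<Rightarrow> real" where
  "H1 p = ent (pX1 p) UNIV"
definition H2 :: "('a::finite \<times> 'b::finite \<Rightarrow> real) \<Rightarrow> real" where
  "H2 p = ent (pX2 p) UNIV"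

definition HU :: "('a::finite \<times> 'b::finite \<Rightarrow> real) \<Rightarrow> nat \<Rightarrow> ('a \<Rightarrow> 'b \<Rightarrow> nat \<Rightarrow> real) \<Rightarrow> real" where
  "HU p K q = ent (pU p q) {..<K}"
definition H12U :: "('a::finite \<times> 'b::finite \<Rightarrow> real) \<Rightarrow> nat \<Rightarrow> ('a \<Rightarrow> 'b \<Rightarrow> nat \<Rightarrow> real) \<Rightarrow> real" where
  "H12U p K q = ent (pJ p q) (UNIV \<times> UNIV \<times> {..<K})"

definition H1_given_U :: "('a::finite \<times> 'b::finite \<Rightarrow> real) \<Rightarrow> nat \<Rightarrow> ('a \<Rightarrow> 'b \<Rightarrow> nat \<Rightarrow> real) \<Rightarrow> real" where
  "H1_given_U p K q = ent (pX1U p q) (UNIV \<times> {..<K}) - HU p K q"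
definition H2_given_U :: "('a::finite \<times> 'b::finite \<Rightarrow> real) \<Rightarrow> nat \<Rightarrow> ('a \<Rightarrow> 'b \<Rightarrow> nat \<Rightarrow> real) \<Rightarrow> real" where
  "H2_given_U p K q = ent (pX2U p q) (UNIV \<times> {..<K}) - HU p K q"
definition I12_U :: "('a::finite \<times> 'b::finite \<Rightarrow> real) \<Rightarrow> nat \<Rightarrow> ('a \<Rightarrow> 'b \<Rightarrow> nat \<Rightarrow> real) \<Rightarrow> real" where
  "I12_U p K q = H12 p + HU p K q - H12U p K q"

definition markov :: "('a::finite \<times> 'b::finite \<Rightarrow> real) \<Rightarrow> nat \<Rightarrow> ('a \<Rightarrow> 'b \<Rightarrow> nat \<Rightarrow> real) \<Rightarrow> bool" where
  "markov p K q \<longleftrightarrow> (\<forall>x1 x2. \<forall>u<K.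
      pJ p q (x1, x2, u) * pU p q u = pX1U p q (x1, u) * pX2U p q (x2, u))"

definition M1 :: "('a::finite \<times> 'b::finite \<Rightarrow> real) \<Rightarrow> real" where
  "M1 p = Sup {min (H1_given_U p K q) (H2_given_U p K q) / 2 | K q.
                  is_cond_pmf K q \<and> markov p K q}"

definition R_LB :: "('a::finite \<times> 'b::finite \<Rightarrow> real) \<Rightarrow> real \<Rightarrow> real" where
  "R_LB p M = Inf {R. R \<ge> H12 p - 2 * M \<and> R \<ge> (H12 p - M) / 2 \<and>
                      R \<ge> (H12 p + max (H1 p) (H2 p)) / 2 - M}"

definition R_GW_U :: "('a::finite \<times> 'b::finite \<Rightarrow> real) \<Rightarrow> real \<Rightarrow> nat \<Rightarrow> ('a \<Rightarrow> 'b \<Rightarrow> nat \<Rightarrow> real) \<Rightarrow> real" where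
  "R_GW_U p M K q = (let I = I12_U p K q; A = H1_given_U p K q; B = H2_given_U p K q in
     Inf {R. R \<ge> I + A + B - 2 * M \<and> R \<ge> (I + A + B - M) / 2 \<and>
             R \<ge> I + A + B / 2 - M \<and> R \<ge> I + A / 2 + B - M})"

definition R_GW :: "('a::finite \<times> 'b::finite \<Rightarrow> real) \<Rightarrow> real \<Rightarrow> real" where
  "R_GW p M = Inf {R_GW_U p M K q | K q.
      is_cond_pmf K q \<and> K \<le> card (UNIV::'a set) * card (UNIV::'b set) + 2}"

end

theory Submission
  imports Defs "HOL-Analysis.Analysis"
begin


lemma ent_ln: "ent f S = - (\<Sum>s\<in>S. f s * ln (f s)) / ln 2"
proof -
  have "(\<Sum>s\<in>S. (if f s = 0 then 0 else f s * log 2 (f s))) = (\<Sum>s\<in>S. f s * ln (f s) / ln 2)"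
    by (intro sum.cong) (auto simp: log_def)
  then show ?thesis unfolding ent_def by (simp add: sum_divide_distrib)
qed


lemma shannon_ln:
  fixes r :: "'x \<times> 'y \<times> 'z \<Rightarrow> real"
  assumes fX: "finite X" and fY: "finite Y" and fZ: "finite Z" and nn: "\<And>x y z. 0 \<le> r (x,y,z)"
  defines "rXZ \<equiv> \<lambda>x z. \<Sum>y\<in>Y. r (x,y,z)"
  defines "rYZ \<equiv> \<lambda>y z. \<Sum>x\<in>X. r (x,y,z)"
  defines "rZ \<equiv> \<lambda>z. \<Sum>x\<in>X. \<Sum>y\<in>Y. r (x,y,z)"
  shows "(\<Sum>x\<in>X. \<Sum>z\<in>Z. rXZ x z * ln (rXZ x z)) + (\<Sum>y\<in>Y. \<Sum>z\<in>Z. rYZ y z * ln (rYZ y z))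
     \<le> (\<Sum>x\<in>X. \<Sum>y\<in>Y. \<Sum>z\<in>Z. r (x,y,z) * ln (r (x,y,z))) + (\<Sum>z\<in>Z. rZ z * ln (rZ z))"
proof -
  have e1: "(\<Sum>x\<in>X. \<Sum>z\<in>Z. rXZ x z * ln (rXZ x z)) = (\<Sum>x\<in>X. \<Sum>y\<in>Y. \<Sum>z\<in>Z. r (x,y,z) * ln (rXZ x z))"
    unfolding rXZ_def sum_distrib_right by (simp add: sum.swap[of _ Z Y])
  have e2: "(\<Sum>y\<in>Y. \<Sum>z\<in>Z. rYZ y z * ln (rYZ y z)) = (\<Sum>x\<in>X. \<Sum>y\<in>Y. \<Sum>z\<in>Z. r (x,y,z) * ln (rYZ y z))"
    unfolding rYZ_def sum_distrib_right
    by (simp add: sum.swap[of _ Z X] sum.swap[of _ Y X])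
  have e3: "(\<Sum>z\<in>Z. rZ z * ln (rZ z)) = (\<Sum>x\<in>X. \<Sum>y\<in>Y. \<Sum>z\<in>Z. r (x,y,z) * ln (rZ z))"
    unfolding rZ_def sum_distrib_right
    by (simp add: sum.swap[of _ Z X] sum.swap[of _ Z Y])
  have pw: "r (x,y,z) * (ln (r (x,y,z)) + ln (rZ z) - ln (rXZ x z) - ln (rYZ y z))
      \<ge> r (x,y,z) - rXZ x z * rYZ y z / rZ z"
    if "x \<in> X" "y \<in> Y" "z \<in> Z" for x y z
  proof (cases "r (x,y,z) = 0")
    case True
    have "0 \<le> rXZ x z" "0 \<le> rYZ y z" "0 \<le> rZ z"
      unfolding rXZ_def rYZ_def rZ_def by (auto intro!: sum_nonneg nn)
    then show ?thesis using True by simp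
  next
    case False
    then have rp: "r (x,y,z) > 0" using nn[of x y z] by linarith
    have a: "r (x,y,z) \<le> rXZ x z" unfolding rXZ_def
      using that fY nn by (intro member_le_sum) auto
    have b: "r (x,y,z) \<le> rYZ y z" unfolding rYZ_def
      using that fX nn by (intro member_le_sum) auto
    have c: "rXZ x z \<le> rZ z" unfolding rZ_def rXZ_def
      using that fX fY nn by (intro member_le_sum) (auto intro: sum_nonneg)
    have pXZ: "rXZ x z > 0" and pYZ: "rYZ y z > 0" and pZ: "rZ z > 0"
      using a b c rp by linarith+
    define t where "t = rXZ x z * rYZ y z / (r (x,y,z) * rZ z)"
    have tp: "t > 0" unfolding t_def using rp pXZ pYZ pZ by auto
    have "ln t \<le> t - 1" using tp by (rule ln_le_minus_one)
    moreover have "ln t = ln (rXZ x z) + ln (rYZ y z) - ln (r (x,y,z)) - ln (rZ z)"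
      unfolding t_def using rp pXZ pYZ pZ by (simp add: ln_div ln_mult)
    ultimately have "ln (r (x,y,z)) + ln (rZ z) - ln (rXZ x z) - ln (rYZ y z) \<ge> 1 - t" by linarith
    then have "r (x,y,z) * (ln (r (x,y,z)) + ln (rZ z) - ln (rXZ x z) - ln (rYZ y z)) \<ge> r (x,y,z) * (1 - t)"
      using rp by (intro mult_left_mono) auto
    moreover have "r (x,y,z) * (1 - t) = r (x,y,z) - rXZ x z * rYZ y z / rZ z"
      unfolding t_def using rp pZ by (simp add: field_simps)
    ultimately show ?thesis by linarith
  qed
  have s1: "(\<Sum>x\<in>X. \<Sum>y\<in>Y. \<Sum>z\<in>Z. r (x,y,z) - rXZ x z * rYZ y z / rZ z)
     \<le> (\<Sum>x\<in>X. \<Sum>y\<in>Y. \<Sum>z\<in>Z. r (x,y,z) * (ln (r (x,y,z)) + ln (rZ z) - ln (rXZ x z) - ln (rYZ y z)))"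
    using pw by (intro sum_mono) auto
  have s2: "(\<Sum>x\<in>X. \<Sum>y\<in>Y. \<Sum>z\<in>Z. rXZ x z * rYZ y z / rZ z) = (\<Sum>x\<in>X. \<Sum>y\<in>Y. \<Sum>z\<in>Z. r (x,y,z))"
  proof -
    have "(\<Sum>x\<in>X. \<Sum>y\<in>Y. \<Sum>z\<in>Z. rXZ x z * rYZ y z / rZ z) = (\<Sum>x\<in>X. \<Sum>z\<in>Z. \<Sum>y\<in>Y. rXZ x z * rYZ y z / rZ z)"
      by (intro sum.cong refl sum.swap)
    also have "\<dots> = (\<Sum>z\<in>Z. \<Sum>x\<in>X. \<Sum>y\<in>Y. rXZ x z * rYZ y z / rZ z)" by (rule sum.swap)
    also have "\<dots> = (\<Sum>z\<in>Z. (\<Sum>x\<in>X. rXZ x z) * (\<Sum>y\<in>Y. rYZ y z) / rZ z)"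
      by (intro sum.cong refl) (simp add: sum_product sum_divide_distrib)
    also have "\<dots> = (\<Sum>z\<in>Z. rZ z * rZ z / rZ z)"
      unfolding rXZ_def rYZ_def rZ_def by (simp add: sum.swap[of _ Y X])
    also have "\<dots> = (\<Sum>z\<in>Z. rZ z)" by (intro sum.cong) auto
    also have "\<dots> = (\<Sum>x\<in>X. \<Sum>y\<in>Y. \<Sum>z\<in>Z. r (x,y,z))"
      unfolding rZ_def by (simp add: sum.swap[of _ Z X] sum.swap[of _ Z Y])
    finally show ?thesis .
  qed
  have "(\<Sum>x\<in>X. \<Sum>y\<in>Y. \<Sum>z\<in>Z. r (x,y,z) - rXZ x z * rYZ y z / rZ z) = 0"
    using s2 by (simp add: sum_subtractf)
  with s1 have "0 \<le> (\<Sum>x\<in>X. \<Sum>y\<in>Y. \<Sum>z\<in>Z. r (x,y,z) * (ln (r (x,y,z)) + ln (rZ z) - ln (rXZ x z) - ln (rYZ y z)))"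
    by linarith
  also have "\<dots> = (\<Sum>x\<in>X. \<Sum>y\<in>Y. \<Sum>z\<in>Z. r (x,y,z) * ln (r (x,y,z))) + (\<Sum>x\<in>X. \<Sum>y\<in>Y. \<Sum>z\<in>Z. r (x,y,z) * ln (rZ z))
     - (\<Sum>x\<in>X. \<Sum>y\<in>Y. \<Sum>z\<in>Z. r (x,y,z) * ln (rXZ x z)) - (\<Sum>x\<in>X. \<Sum>y\<in>Y. \<Sum>z\<in>Z. r (x,y,z) * ln (rYZ y z))"
    by (simp add: algebra_simps sum.distrib sum_subtractf)
  finally show ?thesis using e1 e2 e3 by linarith
qed



definition E :: "real \<Rightarrow> real" where "E t = t * ln t"

lemma ent_E: "ent f S = - (\<Sum>s\<in>S. E (f s)) / ln 2"
  unfolding ent_ln E_def ..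

lemma E_mult: "0 \<le> x \<Longrightarrow> 0 \<le> y \<Longrightarrow> E (x * y) = y * E x + x * E y"
  unfolding E_def
  by (cases "x = 0"; cases "y = 0") (auto simp: ln_mult algebra_simps)

lemma E_1[simp]: "E 1 = 0" by (simp add: E_def)

lemma struct_ents:
  fixes p :: "'a::finite \<times> 'b::finite \<Rightarrow> real"
  assumes w: "\<And>j. 0 \<le> w j" and a: "\<And>j x. 0 \<le> a j x" and b: "\<And>j y. 0 \<le> b j y"
    and sa: "\<And>j. j < K \<Longrightarrow> (\<Sum>x\<in>UNIV. a j x) = 1"
    and sb: "\<And>j. j < K \<Longrightarrow> (\<Sum>y\<in>UNIV. b j y) = 1"
    and J: "\<And>x1 x2 j. j < K \<Longrightarrow> pJ p q (x1,x2,j) = w j * a j x1 * b j x2"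
  shows "\<And>j. j < K \<Longrightarrow> pU p q j = w j"
    and "\<And>x1 j. j < K \<Longrightarrow> pX1U p q (x1,j) = w j * a j x1"
    and "\<And>x2 j. j < K \<Longrightarrow> pX2U p q (x2,j) = w j * b j x2"
    and "HU p K q = ent w {..<K}"
    and "H1_given_U p K q = (\<Sum>j<K. w j * ent (a j) UNIV)"
    and "H2_given_U p K q = (\<Sum>j<K. w j * ent (b j) UNIV)"
    and "H12U p K q = ent w {..<K} + (\<Sum>j<K. w j * ent (a j) UNIV) + (\<Sum>j<K. w j * ent (b j) UNIV)"
    and "markov p K q"
    and "I12_U p K q + H1_given_U p K q + H2_given_U p K q = H12 p"
proof -
  have l2: "ln 2 > (0::real)" by simp
  show U: "pU p q j = w j" if "j < K" for j
    using that unfolding pU_def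
    by (simp add: J sum_distrib_left[symmetric] sum_distrib_right[symmetric] sa sb
        mult.assoc sum_product[symmetric])
  show X1: "pX1U p q (x1,j) = w j * a j x1" if "j < K" for x1 j
    using that unfolding pX1U_def by (simp add: J sum_distrib_left[symmetric] sb)
  show X2: "pX2U p q (x2,j) = w j * b j x2" if "j < K" for x2 j
    using that unfolding pX2U_def
    by (simp add: J sum_distrib_left[symmetric] sum_distrib_right[symmetric] sa)
  show HU: "HU p K q = ent w {..<K}"
    unfolding HU_def ent_E using U by simp
  have HX1U: "ent (pX1U p q) (UNIV \<times> {..<K}) = ent w {..<K} + (\<Sum>j<K. w j * ent (a j) UNIV)"
  proof -
    have "(\<Sum>s\<in>UNIV \<times> {..<K}. E (pX1U p q s)) = (\<Sum>s\<in>UNIV \<times> {..<K}. (\<lambda>(x,j). E (w j * a j x)) s)"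
      by (rule sum.cong) (auto simp: X1)
    also have "\<dots> = (\<Sum>x\<in>UNIV. \<Sum>j<K. E (w j * a j x))"
      by (simp add: sum.cartesian_product)
    also have "\<dots> = (\<Sum>j<K. \<Sum>x\<in>UNIV. a j x * E (w j) + w j * E (a j x))"
      by (subst sum.swap) (simp add: E_mult w a)
    also have "\<dots> = (\<Sum>j<K. E (w j) + w j * (\<Sum>x\<in>UNIV. E (a j x)))"
      by (intro sum.cong refl)
         (simp add: sum.distrib sum_distrib_left[symmetric] sum_distrib_right[symmetric] sa)
    finally show ?thesis unfolding ent_E
      by (simp add: sum.distrib sum_divide_distrib[symmetric] sum_negf[symmetric] diff_divide_distrib
          field_simps sum_distrib_left)
  qed
  have HX2U: "ent (pX2U p q) (UNIV \<times> {..<K}) = ent w {..<K} + (\<Sum>j<K. w j * ent (b j) UNIV)"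
  proof -
    have "(\<Sum>s\<in>UNIV \<times> {..<K}. E (pX2U p q s)) = (\<Sum>s\<in>UNIV \<times> {..<K}. (\<lambda>(x,j). E (w j * b j x)) s)"
      by (rule sum.cong) (auto simp: X2)
    also have "\<dots> = (\<Sum>x\<in>UNIV. \<Sum>j<K. E (w j * b j x))"
      by (simp add: sum.cartesian_product)
    also have "\<dots> = (\<Sum>j<K. \<Sum>x\<in>UNIV. b j x * E (w j) + w j * E (b j x))"
      by (subst sum.swap) (simp add: E_mult w b)
    also have "\<dots> = (\<Sum>j<K. E (w j) + w j * (\<Sum>x\<in>UNIV. E (b j x)))"
      by (intro sum.cong refl)
         (simp add: sum.distrib sum_distrib_left[symmetric] sum_distrib_right[symmetric] sb)
    finally show ?thesis unfolding ent_E
      by (simp add: sum.distrib sum_divide_distrib[symmetric] sum_negf[symmetric] diff_divide_distrib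
          field_simps sum_distrib_left)
  qed
  show H1: "H1_given_U p K q = (\<Sum>j<K. w j * ent (a j) UNIV)"
    unfolding H1_given_U_def HX1U HU by simp
  show H2: "H2_given_U p K q = (\<Sum>j<K. w j * ent (b j) UNIV)"
    unfolding H2_given_U_def HX2U HU by simp
  show H12U: "H12U p K q = ent w {..<K} + (\<Sum>j<K. w j * ent (a j) UNIV) + (\<Sum>j<K. w j * ent (b j) UNIV)"
  proof -
    have "(\<Sum>s\<in>UNIV \<times> UNIV \<times> {..<K}. E (pJ p q s)) = (\<Sum>x\<in>UNIV. \<Sum>y\<in>UNIV. \<Sum>j<K. E (w j * (a j x * b j y)))"
    proof -
      have "(\<Sum>s\<in>UNIV \<times> UNIV \<times> {..<K}. E (pJ p q s)) = (\<Sum>s\<in>UNIV \<times> UNIV \<times> {..<K}. (\<lambda>(x,y,j). E (w j * (a j x * b j y))) s)"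
        by (rule sum.cong) (auto simp: J mult.assoc)
      then show ?thesis by (simp add: sum.cartesian_product)
    qed
    also have "\<dots> = (\<Sum>j<K. \<Sum>x\<in>UNIV. \<Sum>y\<in>UNIV. a j x * b j y * E (w j) + w j * (b j y * E (a j x) + a j x * E (b j y)))"
      by (subst sum.swap, subst (2) sum.swap) (simp add: E_mult w a b mult_nonneg_nonneg)
    also have "\<dots> = (\<Sum>j<K. E (w j) + w j * (\<Sum>x\<in>UNIV. E (a j x)) + w j * (\<Sum>y\<in>UNIV. E (b j y)))"
    proof (intro sum.cong refl)
      fix j assume "j \<in> {..<K}"
      then have j: "j < K" by simp
      have "(\<Sum>x\<in>UNIV. \<Sum>y\<in>UNIV. a j x * b j y * E (w j) + w j * (b j y * E (a j x) + a j x * E (b j y)))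
        = (\<Sum>x\<in>UNIV. a j x * (\<Sum>y\<in>UNIV. b j y) * E (w j) + w j * ((\<Sum>y\<in>UNIV. b j y) * E (a j x) + a j x * (\<Sum>y\<in>UNIV. E (b j y))))"
        by (simp add: sum.distrib sum_distrib_left sum_distrib_right algebra_simps)
      also have "\<dots> = (\<Sum>x\<in>UNIV. a j x * E (w j) + w j * E (a j x) + w j * (a j x * (\<Sum>y\<in>UNIV. E (b j y))))"
        using sb[OF j] by (simp add: algebra_simps)
      also have "\<dots> = E (w j) + w j * (\<Sum>x\<in>UNIV. E (a j x)) + w j * (\<Sum>y\<in>UNIV. E (b j y))"
        using sa[OF j] by (simp add: sum.distrib sum_distrib_left[symmetric] sum_distrib_right[symmetric] mult.assoc)
      finally show "(\<Sum>x\<in>UNIV. \<Sum>y\<in>UNIV. a j x * b j y * E (w j) + w j * (b j y * E (a j x) + a j x * E (b j y)))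
        = E (w j) + w j * (\<Sum>x\<in>UNIV. E (a j x)) + w j * (\<Sum>y\<in>UNIV. E (b j y))" .
    qed
    finally show ?thesis unfolding H12U_def ent_E
      by (simp add: sum.distrib sum_divide_distrib[symmetric] sum_negf[symmetric] diff_divide_distrib
          field_simps sum_distrib_left)
  qed
  show "markov p K q" unfolding markov_def
    using U X1 X2 J by (simp add: algebra_simps)
  show "I12_U p K q + H1_given_U p K q + H2_given_U p K q = H12 p"
    unfolding I12_U_def H1 H2 H12U HU by simp
qed



lemma shannon_ent:
  fixes r :: "'x \<times> 'y \<times> 'z \<Rightarrow> real"
  assumes fX: "finite X" and fY: "finite Y" and fZ: "finite Z" and nn: "\<And>x y z. 0 \<le> r (x,y,z)"
  shows "ent r (X \<times> Y \<times> Z) + ent (\<lambda>z. \<Sum>x\<in>X. \<Sum>y\<in>Y. r (x,y,z)) Z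
     \<le> ent (\<lambda>(x,z). \<Sum>y\<in>Y. r (x,y,z)) (X \<times> Z) + ent (\<lambda>(y,z). \<Sum>x\<in>X. r (x,y,z)) (Y \<times> Z)"
proof -
  have l2: "ln 2 > (0::real)" by simp
  have *: "(\<Sum>x\<in>X. \<Sum>z\<in>Z. (\<Sum>y\<in>Y. r (x,y,z)) * ln (\<Sum>y\<in>Y. r (x,y,z))) + (\<Sum>y\<in>Y. \<Sum>z\<in>Z. (\<Sum>x\<in>X. r (x,y,z)) * ln (\<Sum>x\<in>X. r (x,y,z)))
     \<le> (\<Sum>x\<in>X. \<Sum>y\<in>Y. \<Sum>z\<in>Z. r (x,y,z) * ln (r (x,y,z))) + (\<Sum>z\<in>Z. (\<Sum>x\<in>X. \<Sum>y\<in>Y. r (x,y,z)) * ln (\<Sum>x\<in>X. \<Sum>y\<in>Y. r (x,y,z)))"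
    by (rule shannon_ln[OF fX fY fZ]) (rule nn)
  note ** = divide_right_mono[OF * less_imp_le[OF l2]]
  show ?thesis unfolding ent_ln sum.cartesian_product' prod.case
    using ** unfolding add_divide_distrib by linarith
qed

lemma ent_reindex:
  assumes "bij_betw h S T" "\<And>x. x \<in> S \<Longrightarrow> g x = f (h x)"
  shows "ent g S = ent f T"
proof -
  have "ent g S = ent (\<lambda>x. f (h x)) S" unfolding ent_def using assms(2) by (intro arg_cong[where f=uminus] sum.cong) auto
  also have "\<dots> = ent f T" unfolding ent_def
    using sum.reindex_bij_betw[OF assms(1), of "\<lambda>s. if f s = 0 then 0 else f s * log 2 (f s)"] by simp
  finally show ?thesis .
qed

lemma pJ_nn: "is_pmf2 p \<Longrightarrow> is_cond_pmf K q \<Longrightarrow> 0 \<le> pJ p q s"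
  unfolding is_pmf2_def is_cond_pmf_def pJ_def by (auto split: prod.splits)

lemma pJ_sumU: "is_cond_pmf K q \<Longrightarrow> (\<Sum>u<K. pJ p q (x1,x2,u)) = p (x1,x2)"
  unfolding is_cond_pmf_def pJ_def by (simp add: sum_distrib_left[symmetric])

lemma pJ_sumU2: "is_cond_pmf K q \<Longrightarrow> (\<Sum>u<K. \<Sum>y\<in>B. pJ p q (x,y,u)) = (\<Sum>y\<in>B. p (x,y))"
  by (subst sum.swap) (simp add: pJ_sumU)

lemma pJ_sumU3: "is_cond_pmf K q \<Longrightarrow> (\<Sum>u<K. \<Sum>y\<in>B. pJ p q (y,x,u)) = (\<Sum>y\<in>B. p (y,x))"
  by (subst sum.swap) (simp add: pJ_sumU)

lemma shannon_a:
  assumes "is_pmf2 p" "is_cond_pmf K q"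
  shows "H12U p K q + HU p K q \<le> ent (pX1U p q) (UNIV \<times> {..<K}) + ent (pX2U p q) (UNIV \<times> {..<K})"
proof -
  have "ent (pJ p q) (UNIV \<times> UNIV \<times> {..<K}) + ent (\<lambda>z. \<Sum>x\<in>UNIV. \<Sum>y\<in>UNIV. pJ p q (x,y,z)) {..<K}
     \<le> ent (\<lambda>(x,z). \<Sum>y\<in>UNIV. pJ p q (x,y,z)) (UNIV \<times> {..<K}) + ent (\<lambda>(y,z). \<Sum>x\<in>UNIV. pJ p q (x,y,z)) (UNIV \<times> {..<K})"
    by (rule shannon_ent) (auto intro: pJ_nn[OF assms])
  moreover have "(\<lambda>z. \<Sum>x\<in>UNIV. \<Sum>y\<in>UNIV. pJ p q (x,y,z)) = pU p q" by (simp add: pU_def fun_eq_iff)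
  moreover have "(\<lambda>(x,z). \<Sum>y\<in>UNIV. pJ p q (x,y,z)) = pX1U p q" by (simp add: pX1U_def fun_eq_iff)
  moreover have "(\<lambda>(y,z). \<Sum>x\<in>UNIV. pJ p q (x,y,z)) = pX2U p q" by (simp add: pX2U_def fun_eq_iff)
  ultimately show ?thesis unfolding H12U_def HU_def by simp
qed

lemma shannon_b:
  assumes "is_pmf2 p" "is_cond_pmf K q"
  shows "H12U p K q + H1 p \<le> ent (pX1U p q) (UNIV \<times> {..<K}) + H12 p"
proof -
  define r where "r = (\<lambda>(u::nat, x2::'b, x1::'a). pJ p q (x1,x2,u))"
  have "ent r ({..<K} \<times> UNIV \<times> UNIV) + ent (\<lambda>z. \<Sum>x\<in>{..<K}. \<Sum>y\<in>UNIV. r (x,y,z)) UNIV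
     \<le> ent (\<lambda>(x,z). \<Sum>y\<in>UNIV. r (x,y,z)) ({..<K} \<times> UNIV) + ent (\<lambda>(y,z). \<Sum>x\<in>{..<K}. r (x,y,z)) (UNIV \<times> UNIV)"
    by (rule shannon_ent) (auto simp: r_def intro: pJ_nn[OF assms])
  moreover have "ent r ({..<K} \<times> UNIV \<times> UNIV) = H12U p K q"
    unfolding H12U_def
    by (rule ent_reindex[of "\<lambda>(u,x2,x1). (x1,x2,u)"]) (auto simp: bij_betw_def inj_on_def image_def r_def)
  moreover have "(\<lambda>z. \<Sum>x\<in>{..<K}. \<Sum>y\<in>UNIV. r (x,y,z)) = pX1 p"
    using pJ_sumU2[OF assms(2)] by (simp add: fun_eq_iff r_def pX1_def)
  moreover have "ent (\<lambda>(x,z). \<Sum>y\<in>UNIV. r (x,y,z)) ({..<K} \<times> UNIV) = ent (pX1U p q) (UNIV \<times> {..<K})"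
    by (rule ent_reindex[of "\<lambda>(u,x1). (x1,u)"]) (auto simp: bij_betw_def inj_on_def image_def r_def pX1U_def)
  moreover have "ent (\<lambda>(y,z). \<Sum>x\<in>{..<K}. r (x,y,z)) (UNIV \<times> UNIV) = H12 p"
    unfolding H12_def
    by (rule ent_reindex[of "\<lambda>(x2,x1). (x1,x2)"])
       (auto simp: bij_betw_def inj_on_def image_def r_def pJ_sumU[OF assms(2)])
  ultimately show ?thesis unfolding H1_def by simp
qed

lemma shannon_b':
  assumes "is_pmf2 p" "is_cond_pmf K q"
  shows "H12U p K q + H2 p \<le> ent (pX2U p q) (UNIV \<times> {..<K}) + H12 p"
proof -
  define r where "r = (\<lambda>(u::nat, x1::'a, x2::'b). pJ p q (x1,x2,u))"
  have "ent r ({..<K} \<times> UNIV \<times> UNIV) + ent (\<lambda>z. \<Sum>x\<in>{..<K}. \<Sum>y\<in>UNIV. r (x,y,z)) UNIV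
     \<le> ent (\<lambda>(x,z). \<Sum>y\<in>UNIV. r (x,y,z)) ({..<K} \<times> UNIV) + ent (\<lambda>(y,z). \<Sum>x\<in>{..<K}. r (x,y,z)) (UNIV \<times> UNIV)"
    by (rule shannon_ent) (auto simp: r_def intro: pJ_nn[OF assms])
  moreover have "ent r ({..<K} \<times> UNIV \<times> UNIV) = H12U p K q"
    unfolding H12U_def
    by (rule ent_reindex[of "\<lambda>(u,x1,x2). (x1,x2,u)"]) (auto simp: bij_betw_def inj_on_def image_def r_def)
  moreover have "(\<lambda>z. \<Sum>x\<in>{..<K}. \<Sum>y\<in>UNIV. r (x,y,z)) = pX2 p"
    using pJ_sumU3[OF assms(2)] by (simp add: fun_eq_iff r_def pX2_def)
  moreover have "ent (\<lambda>(x,z). \<Sum>y\<in>UNIV. r (x,y,z)) ({..<K} \<times> UNIV) = ent (pX2U p q) (UNIV \<times> {..<K})"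
    by (rule ent_reindex[of "\<lambda>(u,x2). (x2,u)"]) (auto simp: bij_betw_def inj_on_def image_def r_def pX2U_def)
  moreover have "ent (\<lambda>(y,z). \<Sum>x\<in>{..<K}. r (x,y,z)) (UNIV \<times> UNIV) = H12 p"
    unfolding H12_def
    by (auto simp: r_def pJ_sumU[OF assms(2)] UNIV_Times_UNIV[symmetric] simp del: UNIV_Times_UNIV
        intro!: arg_cong[where f="\<lambda>f. ent f UNIV"])
  ultimately show ?thesis unfolding H2_def by simp
qed

lemma shannon_c:
  assumes "is_pmf2 p" "is_cond_pmf K q"
  shows "ent (pX1U p q) (UNIV \<times> {..<K}) \<le> H1 p + HU p K q"
proof -
  define r where "r = (\<lambda>(x1::'a, u::nat, z::unit). pX1U p q (x1,u))"
  have nn: "0 \<le> pX1U p q s" for s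
    unfolding pX1U_def by (auto split: prod.splits intro!: sum_nonneg pJ_nn[OF assms])
  have "ent r (UNIV \<times> {..<K} \<times> UNIV) + ent (\<lambda>z. \<Sum>x\<in>UNIV. \<Sum>y\<in>{..<K}. r (x,y,z)) UNIV
     \<le> ent (\<lambda>(x,z). \<Sum>y\<in>{..<K}. r (x,y,z)) (UNIV \<times> UNIV) + ent (\<lambda>(y,z). \<Sum>x\<in>UNIV. r (x,y,z)) ({..<K} \<times> UNIV)"
    by (rule shannon_ent) (auto simp: r_def nn)
  moreover have "ent r (UNIV \<times> {..<K} \<times> UNIV) = ent (pX1U p q) (UNIV \<times> {..<K})"
    by (rule ent_reindex[of "\<lambda>(x,u,z). (x,u)"]) (auto simp: bij_betw_def inj_on_def image_def r_def)
  moreover have "(\<Sum>x\<in>UNIV. \<Sum>y\<in>{..<K}. r (x,y,z)) = 1" for z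
  proof -
    have "(\<Sum>x\<in>UNIV. \<Sum>y\<in>{..<K}. r (x,y,z)) = (\<Sum>x\<in>UNIV. \<Sum>x2\<in>UNIV. p (x,x2))"
      using pJ_sumU2[OF assms(2)] by (simp add: r_def pX1U_def)
    also have "\<dots> = 1" using assms(1) unfolding is_pmf2_def
      by (simp add: sum.cartesian_product' UNIV_Times_UNIV[symmetric] del: UNIV_Times_UNIV)
    finally show ?thesis .
  qed
  then have "ent (\<lambda>z. \<Sum>x\<in>UNIV. \<Sum>y\<in>{..<K}. r (x,y,z)) UNIV = 0" by (simp add: ent_def)
  moreover have "ent (\<lambda>(x,z). \<Sum>y\<in>{..<K}. r (x,y,z)) (UNIV \<times> UNIV) = H1 p"
    unfolding H1_def
    by (rule ent_reindex[of "\<lambda>(x,z). x"])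
       (auto simp: bij_betw_def inj_on_def image_def r_def pX1U_def pX1_def pJ_sumU2[OF assms(2)])
  moreover have "ent (\<lambda>(y,z). \<Sum>x\<in>UNIV. r (x,y,z)) ({..<K} \<times> UNIV) = HU p K q"
    unfolding HU_def
    by (rule ent_reindex[of "\<lambda>(y,z). y"])
       (auto simp: bij_betw_def inj_on_def image_def r_def pX1U_def pU_def)
  ultimately show ?thesis by simp
qed



lemma inf3: "Inf {R::real. R \<ge> a \<and> R \<ge> b \<and> R \<ge> c} = max a (max b c)"
proof -
  have "{R::real. R \<ge> a \<and> R \<ge> b \<and> R \<ge> c} = {max a (max b c)..}" by auto
  then show ?thesis by simp
qed

lemma inf4: "Inf {R::real. R \<ge> a \<and> R \<ge> b \<and> R \<ge> c \<and> R \<ge> d} = max a (max b (max c d))"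
proof -
  have "{R::real. R \<ge> a \<and> R \<ge> b \<and> R \<ge> c \<and> R \<ge> d} = {max a (max b (max c d))..}" by auto
  then show ?thesis by simp
qed

lemma R_LB_eq: "R_LB p M = max (H12 p - 2 * M) (max ((H12 p - M) / 2) ((H12 p + max (H1 p) (H2 p)) / 2 - M))"
  unfolding R_LB_def by (rule inf3)

lemma R_GW_U_eq: "R_GW_U p M K q =
  (let I = I12_U p K q; A = H1_given_U p K q; B = H2_given_U p K q in
     max (I + A + B - 2 * M) (max ((I + A + B - M) / 2) (max (I + A + B / 2 - M) (I + A / 2 + B - M))))"
  unfolding R_GW_U_def Let_def by (rule inf4)

lemma lb_arith:
  fixes h12 h1 h2 hu h12u e1 e2 M :: real
  assumes a: "h12u + hu \<le> e1 + e2" and b: "h12u + h1 \<le> e1 + h12" and b': "h12u + h2 \<le> e2 + h12"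
  defines "T \<equiv> (h12 + hu - h12u) + (e1 - hu) + (e2 - hu)"
  shows "max (h12 - 2 * M) (max ((h12 - M) / 2) ((h12 + max h1 h2) / 2 - M))
    \<le> max (T - 2 * M) (max ((T - M) / 2) (max ((h12 + hu - h12u) + (e1 - hu) + (e2 - hu) / 2 - M)
          ((h12 + hu - h12u) + (e1 - hu) / 2 + (e2 - hu) - M)))"
proof -
  have T: "T \<ge> h12" unfolding T_def using a by linarith
  have 1: "h12 - 2 * M \<le> T - 2 * M" using T by linarith
  have 2: "(h12 - M) / 2 \<le> (T - M) / 2" using T by (simp add: divide_right_mono)
  have 3: "(h12 + max h1 h2) / 2 - M \<le> max ((h12 + hu - h12u) + (e1 - hu) + (e2 - hu) / 2 - M)
          ((h12 + hu - h12u) + (e1 - hu) / 2 + (e2 - hu) - M)"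
  proof (cases "h1 \<le> h2")
    case True
    then have m: "max h1 h2 = h2" by simp
    have "(h12 + h2) / 2 - M \<le> (h12 + hu - h12u) + (e1 - hu) / 2 + (e2 - hu) - M" using a b' by argo
    then show ?thesis unfolding m by (rule order.trans[OF _ max.cobounded2])
  next
    case False
    then have m: "max h1 h2 = h1" by simp
    have "(h12 + h1) / 2 - M \<le> (h12 + hu - h12u) + (e1 - hu) + (e2 - hu) / 2 - M" using a b by argo
    then show ?thesis unfolding m by (rule order.trans[OF _ max.cobounded1])
  qed
  show ?thesis using 1 2 3 by (simp only: max.bounded_iff le_max_iff_disj) argo
qed

lemma LB:
  assumes "is_pmf2 p" "is_cond_pmf K q"
  shows "R_LB p M \<le> R_GW_U p M K q"
proof -
  note a = shannon_a[OF assms] and b = shannon_b[OF assms] and b' = shannon_b'[OF assms]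
  show ?thesis unfolding R_LB_eq R_GW_U_eq Let_def I12_U_def H1_given_U_def H2_given_U_def
    by (rule lb_arith[OF a b b'])
qed

lemma build:
  fixes p :: "'a::finite \<times> 'b::finite \<Rightarrow> real"
  assumes p: "is_pmf2 p"
    and w: "\<And>j. 0 \<le> w j" and a: "\<And>j x. 0 \<le> a j x" and b: "\<And>j y. 0 \<le> b j y"
    and sa: "\<And>j. j < K \<Longrightarrow> (\<Sum>x\<in>UNIV. a j x) = 1"
    and sb: "\<And>j. j < K \<Longrightarrow> (\<Sum>y\<in>UNIV. b j y) = 1"
    and K: "0 < K"
    and sumP: "\<And>x1 x2. (\<Sum>j<K. w j * a j x1 * b j x2) = p (x1,x2)"
  shows "\<exists>q. is_cond_pmf K q \<and> markov p K q \<and>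
     H1_given_U p K q = (\<Sum>j<K. w j * ent (a j) UNIV) \<and>
     H2_given_U p K q = (\<Sum>j<K. w j * ent (b j) UNIV) \<and>
     I12_U p K q + H1_given_U p K q + H2_given_U p K q = H12 p"
proof -
  define q where "q = (\<lambda>x1 x2 j. if p (x1,x2) = 0 then (if j = 0 then 1 else 0)
     else w j * a j x1 * b j x2 / p (x1,x2))"
  have pnn: "0 \<le> p z" for z using p unfolding is_pmf2_def by (cases z) auto
  have tnn: "0 \<le> w j * a j x1 * b j x2" for j x1 x2 using w a b by simp
  have J: "pJ p q (x1,x2,j) = w j * a j x1 * b j x2" if "j < K" for x1 x2 j
  proof (cases "p (x1,x2) = 0")
    case True
    then have "(\<Sum>j<K. w j * a j x1 * b j x2) = 0" using sumP by simp
    then have "\<forall>j\<in>{..<K}. w j * a j x1 * b j x2 = 0"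
      by (subst sum_nonneg_eq_0_iff[symmetric]) (auto intro: tnn)
    then show ?thesis using True that unfolding pJ_def q_def by simp
  next
    case False
    then show ?thesis unfolding pJ_def q_def by simp
  qed
  have cq: "is_cond_pmf K q" unfolding is_cond_pmf_def
  proof (intro conjI allI)
    fix x1 x2 u show "0 \<le> q x1 x2 u" unfolding q_def using tnn pnn by (auto intro: divide_nonneg_nonneg)
  next
    fix x1 x2 show "(\<Sum>u<K. q x1 x2 u) = 1"
    proof (cases "p (x1,x2) = 0")
      case True
      then show ?thesis unfolding q_def using K by (simp add: sum.delta)
    next
      case False
      then have "(\<Sum>u<K. q x1 x2 u) = (\<Sum>u<K. w u * a u x1 * b u x2) / p (x1,x2)"
        unfolding q_def by (simp add: sum_divide_distrib)
      then show ?thesis using False sumP by simp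
    qed
  qed
  note S = struct_ents[of w a b K p q, OF w a b sa sb J]
  show ?thesis using cq S(5) S(6) S(8) S(9) by blast
qed



lemma reduce:
  fixes p :: "'a::finite \<times> 'b::finite \<Rightarrow> real" and w :: "nat \<Rightarrow> real"
    and a :: "nat \<Rightarrow> 'a \<Rightarrow> real" and b :: "nat \<Rightarrow> 'b \<Rightarrow> real"
  assumes p: "is_pmf2 p"
    and w: "\<And>j. 0 \<le> w j" and a: "\<And>j x. 0 \<le> a j x" and b: "\<And>j y. 0 \<le> b j y"
    and sa: "\<And>j. j < K \<Longrightarrow> (\<Sum>x\<in>UNIV. a j x) = 1"
    and sb: "\<And>j. j < K \<Longrightarrow> (\<Sum>y\<in>UNIV. b j y) = 1"
    and sumP: "\<And>x1 x2. (\<Sum>j<K. w j * a j x1 * b j x2) = p (x1,x2)"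
  shows "\<exists>K' w' a' b'. 0 < K' \<and> K' \<le> CARD('a) * CARD('b) + 2 \<and> (\<forall>j. 0 \<le> w' j) \<and>
     (\<forall>j x. 0 \<le> a' j x) \<and> (\<forall>j y. 0 \<le> b' j y) \<and>
     (\<forall>j<K'. (\<Sum>x\<in>UNIV. a' j x) = 1) \<and> (\<forall>j<K'. (\<Sum>y\<in>UNIV. b' j y) = 1) \<and>
     (\<forall>x1 x2. (\<Sum>j<K'. w' j * a' j x1 * b' j x2) = p (x1,x2)) \<and>
     (\<Sum>j<K'. w' j * ent (a' j) UNIV) = (\<Sum>j<K. w j * ent (a j) UNIV) \<and>
     (\<Sum>j<K'. w' j * ent (b' j) UNIV) = (\<Sum>j<K. w j * ent (b j) UNIV)"
proof -
  define v :: "nat \<Rightarrow> (real^('a \<times> 'b)) \<times> real \<times> real" where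
    "v j = (\<chi> z. a j (fst z) * b j (snd z), ent (a j) UNIV, ent (b j) UNIV)" for j
  have sw: "(\<Sum>j<K. w j) = 1"
  proof -
    have "(\<Sum>j<K. w j) = (\<Sum>j<K. w j * ((\<Sum>x\<in>UNIV. a j x) * (\<Sum>y\<in>UNIV. b j y)))"
      by (intro sum.cong) (auto simp: sa sb)
    also have "\<dots> = (\<Sum>j<K. \<Sum>x\<in>UNIV. \<Sum>y\<in>UNIV. w j * a j x * b j y)"
      unfolding sum_product by (simp add: sum_distrib_left mult.assoc)
    also have "\<dots> = (\<Sum>x\<in>UNIV. \<Sum>y\<in>UNIV. \<Sum>j<K. w j * a j x * b j y)"
      by (subst sum.swap) (intro sum.cong refl sum.swap)
    also have "\<dots> = (\<Sum>x\<in>UNIV. \<Sum>y\<in>UNIV. p (x,y))" by (simp add: sumP)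
    also have "\<dots> = 1" using p unfolding is_pmf2_def
      by (simp add: sum.cartesian_product' UNIV_Times_UNIV[symmetric] del: UNIV_Times_UNIV)
    finally show ?thesis .
  qed
  define x0 where "x0 = (\<Sum>j<K. w j *\<^sub>R v j)"
  have "x0 \<in> convex hull (v ` {..<K})" unfolding x0_def
    by (rule convex_sum) (auto simp: sw w intro: hull_inc)
  then obtain T c where fT: "finite T" and Tsub: "T \<subseteq> v ` {..<K}"
      and cardT: "int (card T) \<le> aff_dim (v ` {..<K}) + 1"
      and c: "\<forall>y\<in>T. 0 \<le> c y" and sc: "sum c T = 1" and x0T: "(\<Sum>y\<in>T. c y *\<^sub>R y) = x0"
    unfolding convex_hull_caratheodory_aff_dim by blast
  define a0 :: "(real^('a \<times> 'b)) \<times> real \<times> real" where "a0 = (\<chi> z. 1, 0, 0)"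
  have a0: "a0 \<noteq> 0" unfolding a0_def by (auto simp: vec_eq_iff zero_prod_def)
  have "v ` {..<K} \<subseteq> {y. a0 \<bullet> y = 1}"
  proof
    fix y assume "y \<in> v ` {..<K}"
    then obtain j where j: "j < K" "y = v j" by auto
    have "a0 \<bullet> y = (\<Sum>z\<in>UNIV. a j (fst z) * b j (snd z))"
      unfolding j a0_def v_def by (simp add: inner_vec_def)
    also have "\<dots> = (\<Sum>x\<in>UNIV. a j x) * (\<Sum>y\<in>UNIV. b j y)"
      by (simp add: sum_product sum.cartesian_product' UNIV_Times_UNIV[symmetric] del: UNIV_Times_UNIV)
    also have "\<dots> = 1" using j sa sb by simp
    finally show "y \<in> {y. a0 \<bullet> y = 1}" by simp
  qed
  then have "aff_dim (v ` {..<K}) \<le> aff_dim {y. a0 \<bullet> y = 1}" by (rule aff_dim_subset)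
  also have "\<dots> = int (DIM((real^('a \<times> 'b)) \<times> real \<times> real)) - 1" using a0 by simp
  finally have "aff_dim (v ` {..<K}) \<le> int (DIM((real^('a \<times> 'b)) \<times> real \<times> real)) - 1" .
  then have "int (card T) \<le> int (CARD('a) * CARD('b) + 2)" using cardT by simp
  then have cT: "card T \<le> CARD('a) * CARD('b) + 2" by (simp only: of_nat_le_iff)
  have Tne: "T \<noteq> {}" using sc by auto
  then have cpos: "0 < card T" using fT by (simp add: card_gt_0_iff)
  obtain e where e: "bij_betw e {0..<card T} T" using ex_bij_betw_nat_finite[OF fT] by blast
  define idx where "idx y = (SOME j. j < K \<and> v j = y)" for y
  have idx: "idx y < K \<and> v (idx y) = y" if "y \<in> T" for y
  proof -
    have "\<exists>j. j < K \<and> v j = y" using Tsub that by auto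
    then show ?thesis unfolding idx_def by (rule someI_ex)
  qed
  have eT: "e j \<in> T" if "j < card T" for j using e that by (auto simp: bij_betw_def)
  define K' where "K' = card T"
  define w' where "w' j = (if j < K' then c (e j) else 0)" for j
  define a' where "a' j = a (idx (e j))" for j
  define b' where "b' j = b (idx (e j))" for j
  have key: "(\<Sum>j<K'. w' j * g (v (idx (e j)))) = (\<Sum>y\<in>T. c y * g y)" for g
  proof -
    have "(\<Sum>j<K'. w' j * g (v (idx (e j)))) = (\<Sum>j\<in>{0..<card T}. c (e j) * g (e j))"
      unfolding K'_def w'_def by (intro sum.cong) (auto simp: idx eT)
    also have "\<dots> = (\<Sum>y\<in>T. c y * g y)" by (rule sum.reindex_bij_betw[OF e])
    finally show ?thesis .
  qed
  have comp1: "(\<Sum>y\<in>T. c y * (fst y $ z)) = (\<Sum>j<K. w j * a j (fst z) * b j (snd z))" for z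
  proof -
    have "(\<Sum>y\<in>T. c y * (fst y $ z)) = fst x0 $ z" unfolding x0T[symmetric] by (simp add: fst_sum)
    also have "\<dots> = (\<Sum>j<K. w j * a j (fst z) * b j (snd z))" unfolding x0_def v_def by (simp add: fst_sum mult.assoc)
    finally show ?thesis .
  qed
  have comp2: "(\<Sum>y\<in>T. c y * fst (snd y)) = (\<Sum>j<K. w j * ent (a j) UNIV)"
  proof -
    have "(\<Sum>y\<in>T. c y * fst (snd y)) = fst (snd x0)" unfolding x0T[symmetric] by (simp add: fst_sum snd_sum)
    also have "\<dots> = (\<Sum>j<K. w j * ent (a j) UNIV)" unfolding x0_def v_def by (simp add: fst_sum snd_sum)
    finally show ?thesis .
  qed
  have comp3: "(\<Sum>y\<in>T. c y * snd (snd y)) = (\<Sum>j<K. w j * ent (b j) UNIV)"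
  proof -
    have "(\<Sum>y\<in>T. c y * snd (snd y)) = snd (snd x0)" unfolding x0T[symmetric] by (simp add: snd_sum)
    also have "\<dots> = (\<Sum>j<K. w j * ent (b j) UNIV)" unfolding x0_def v_def by (simp add: snd_sum)
    finally show ?thesis .
  qed
  have P': "(\<Sum>j<K'. w' j * a' j x1 * b' j x2) = p (x1,x2)" for x1 x2
    using key[of "\<lambda>y. fst y $ (x1,x2)"] comp1[of "(x1,x2)"]
    using sumP[of x1 x2] by (simp add: v_def a'_def b'_def mult.assoc)
  have A': "(\<Sum>j<K'. w' j * ent (a' j) UNIV) = (\<Sum>j<K. w j * ent (a j) UNIV)"
    using key[of "\<lambda>y. fst (snd y)"] comp2 by (simp add: v_def a'_def)
  have B': "(\<Sum>j<K'. w' j * ent (b' j) UNIV) = (\<Sum>j<K. w j * ent (b j) UNIV)"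
    using key[of "\<lambda>y. snd (snd y)"] comp3 by (simp add: v_def b'_def)
  have w'nn: "\<forall>j. 0 \<le> w' j" unfolding w'_def K'_def using c eT by auto
  have sa': "\<forall>j<K'. (\<Sum>x\<in>UNIV. a' j x) = 1" unfolding a'_def K'_def using idx eT sa by auto
  have sb': "\<forall>j<K'. (\<Sum>y\<in>UNIV. b' j y) = 1" unfolding b'_def K'_def using idx eT sb by auto
  show ?thesis
    apply (rule exI[of _ K'], rule exI[of _ w'], rule exI[of _ a'], rule exI[of _ b'])
    using cpos cT w'nn sa' sb' P' A' B' a b unfolding K'_def a'_def b'_def by auto
qed



lemma pX1U_nn: "is_pmf2 p \<Longrightarrow> is_cond_pmf K q \<Longrightarrow> 0 \<le> pX1U p q s"
  unfolding pX1U_def by (auto split: prod.splits intro!: sum_nonneg pJ_nn)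

lemma pX2U_nn: "is_pmf2 p \<Longrightarrow> is_cond_pmf K q \<Longrightarrow> 0 \<le> pX2U p q s"
  unfolding pX2U_def by (auto split: prod.splits intro!: sum_nonneg pJ_nn)

lemma pU_nn: "is_pmf2 p \<Longrightarrow> is_cond_pmf K q \<Longrightarrow> 0 \<le> pU p q u"
  unfolding pU_def by (auto intro!: sum_nonneg pJ_nn)

lemma markov_struct:
  fixes p :: "'a::finite \<times> 'b::finite \<Rightarrow> real"
  assumes p: "is_pmf2 p" and q: "is_cond_pmf K q" and m: "markov p K q"
  shows "\<exists>(w::nat \<Rightarrow> real) (a::nat \<Rightarrow> 'a \<Rightarrow> real) (b::nat \<Rightarrow> 'b \<Rightarrow> real).
     (\<forall>j. 0 \<le> w j) \<and> (\<forall>j x. 0 \<le> a j x) \<and> (\<forall>j y. 0 \<le> b j y) \<and>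
     (\<forall>j<K. (\<Sum>x\<in>UNIV. a j x) = 1) \<and> (\<forall>j<K. (\<Sum>y\<in>UNIV. b j y) = 1) \<and>
     (\<forall>x1 x2. (\<Sum>j<K. w j * a j x1 * b j x2) = p (x1,x2)) \<and>
     H1_given_U p K q = (\<Sum>j<K. w j * ent (a j) UNIV) \<and>
     H2_given_U p K q = (\<Sum>j<K. w j * ent (b j) UNIV)"
proof -
  define w where "w j = pU p q j" for j
  define a where "a j x = (if w j = 0 then 1 / real CARD('a) else pX1U p q (x,j) / w j)" for j x
  define b where "b j y = (if w j = 0 then 1 / real CARD('b) else pX2U p q (y,j) / w j)" for j y
  have w: "0 \<le> w j" for j unfolding w_def by (rule pU_nn[OF p q])
  have a: "0 \<le> a j x" for j x unfolding a_def using w pX1U_nn[OF p q] by auto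
  have b: "0 \<le> b j y" for j y unfolding b_def using w pX2U_nn[OF p q] by auto
  have sa: "(\<Sum>x\<in>UNIV. a j x) = 1" if "j < K" for j
  proof (cases "w j = 0")
    case True then show ?thesis unfolding a_def by simp
  next
    case False
    have "(\<Sum>x\<in>UNIV. a j x) = (\<Sum>x\<in>UNIV. pX1U p q (x,j)) / w j"
      unfolding a_def using False by (simp add: sum_divide_distrib)
    also have "(\<Sum>x\<in>UNIV. pX1U p q (x,j)) = w j" unfolding w_def pX1U_def pU_def by simp
    finally show ?thesis using False by simp
  qed
  have sb: "(\<Sum>y\<in>UNIV. b j y) = 1" if "j < K" for j
  proof (cases "w j = 0")
    case True then show ?thesis unfolding b_def by simp
  next
    case False
    have "(\<Sum>y\<in>UNIV. b j y) = (\<Sum>y\<in>UNIV. pX2U p q (y,j)) / w j"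
      unfolding b_def using False by (simp add: sum_divide_distrib)
    also have "(\<Sum>y\<in>UNIV. pX2U p q (y,j)) = w j" unfolding w_def pX2U_def pU_def
      by (subst sum.swap) simp
    finally show ?thesis using False by simp
  qed
  have J: "pJ p q (x1,x2,j) = w j * a j x1 * b j x2" if "j < K" for x1 x2 j
  proof (cases "w j = 0")
    case True
    have "pJ p q (x1,x2,j) \<le> (\<Sum>y\<in>UNIV. pJ p q (x1,y,j))"
      by (rule member_le_sum) (auto intro: pJ_nn[OF p q])
    also have "\<dots> \<le> (\<Sum>x\<in>UNIV. \<Sum>y\<in>UNIV. pJ p q (x,y,j))"
      by (rule member_le_sum[of _ _ "\<lambda>x. \<Sum>y\<in>UNIV. pJ p q (x,y,j)"]) (auto intro!: sum_nonneg pJ_nn[OF p q])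
    also have "\<dots> = 0" using True unfolding w_def pU_def by simp
    finally have "pJ p q (x1,x2,j) = 0" using pJ_nn[OF p q] by (meson order.antisym)
    then show ?thesis using True by simp
  next
    case False
    have "pJ p q (x1,x2,j) * w j = pX1U p q (x1,j) * pX2U p q (x2,j)"
      using m that unfolding markov_def w_def by blast
    then have "pJ p q (x1,x2,j) = pX1U p q (x1,j) * pX2U p q (x2,j) / w j"
      using False by (simp add: field_simps)
    then show ?thesis unfolding a_def b_def using False by (simp add: field_simps)
  qed
  note S = struct_ents[of w a b K p q, OF w a b sa sb J]
  have P: "(\<Sum>j<K. w j * a j x1 * b j x2) = p (x1,x2)" for x1 x2
    using pJ_sumU[OF q, of p x1 x2] J by simp
  show ?thesis using w a b sa sb P S(5) S(6) by blast
qed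

lemma M1_nonempty:
  fixes p :: "'a::finite \<times> 'b::finite \<Rightarrow> real"
  assumes p: "is_pmf2 p"
  shows "\<exists>K q. is_cond_pmf K q \<and> markov p K q"
proof -
  define K where "K = CARD('a)"
  obtain e where e: "bij_betw e {0..<K} (UNIV::'a set)"
    using ex_bij_betw_nat_finite[of "UNIV::'a set"] unfolding K_def by auto
  have pnn: "0 \<le> p z" for z using p unfolding is_pmf2_def by (cases z) auto
  define W where "W x = pX1 p x" for x
  define B where "B x y = (if W x = 0 then 1 / real CARD('b) else p (x,y) / W x)" for x y
  define w where "w j = W (e j)" for j
  define a :: "nat \<Rightarrow> 'a \<Rightarrow> real" where "a j x = (if x = e j then 1 else 0)" for j x
  define b where "b j = B (e j)" for j
  have Wnn: "0 \<le> W x" for x unfolding W_def pX1_def by (auto intro: sum_nonneg pnn)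
  have ple: "p (x,y) \<le> W x" for x y unfolding W_def pX1_def
    by (rule member_le_sum[of _ _ "\<lambda>y. p (x,y)"]) (auto intro: pnn)
  have w: "0 \<le> w j" for j unfolding w_def using Wnn by simp
  have a: "0 \<le> a j x" for j x unfolding a_def by simp
  have b: "0 \<le> b j y" for j y unfolding b_def B_def using Wnn pnn by auto
  have sa: "(\<Sum>x\<in>UNIV. a j x) = 1" for j unfolding a_def by simp
  have sb: "(\<Sum>y\<in>UNIV. b j y) = 1" for j
  proof (cases "W (e j) = 0")
    case True then show ?thesis unfolding b_def B_def by simp
  next
    case False
    then show ?thesis unfolding b_def B_def
      by (simp add: sum_divide_distrib[symmetric] W_def pX1_def)
  qed
  have P: "(\<Sum>j<K. w j * a j x1 * b j x2) = p (x1,x2)" for x1 x2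
  proof -
    have "(\<Sum>j<K. w j * a j x1 * b j x2) = (\<Sum>j\<in>{0..<K}. (\<lambda>x. W x * (if x1 = x then 1 else 0) * B x x2) (e j))"
      unfolding w_def a_def b_def by (intro sum.cong) auto
    also have "\<dots> = (\<Sum>x\<in>UNIV. W x * (if x1 = x then 1 else 0) * B x x2)"
      by (rule sum.reindex_bij_betw[OF e])
    also have "\<dots> = (\<Sum>x\<in>UNIV. if x1 = x then W x * B x x2 else 0)" by (intro sum.cong) auto
    also have "\<dots> = W x1 * B x1 x2" by simp
    also have "\<dots> = p (x1,x2)"
      using ple[of x1 x2] pnn[of "(x1,x2)"] by (cases "W x1 = 0") (auto simp: B_def)
    finally show ?thesis .
  qed
  have K: "0 < K" unfolding K_def by simp
  obtain q where "is_cond_pmf K q \<and> markov p K q"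
    using build[OF p w a b sa sb K P] by blast
  then show ?thesis by blast
qed



lemma ub_arith:
  fixes h12 I A B M m1 e X :: real
  assumes T: "I + A + B = h12" and hA: "m1 - e < A / 2" and hB: "m1 - e < B / 2"
    and hM: "M \<le> m1 \<or> h12 - 2 * m1 \<le> M" and e: "0 < e"
  shows "max (I + A + B - 2 * M) (max ((I + A + B - M) / 2) (max (I + A + B / 2 - M) (I + A / 2 + B - M)))
    \<le> max (h12 - 2 * M) (max ((h12 - M) / 2) X) + e"
proof -
  define L0 where "L0 = max (h12 - 2 * M) ((h12 - M) / 2)"
  have L0: "L0 \<le> max (h12 - 2 * M) (max ((h12 - M) / 2) X)" unfolding L0_def
    by (rule max.mono) simp_all
  have L1: "h12 - 2 * M \<le> L0" "(h12 - M) / 2 \<le> L0" unfolding L0_def by auto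
  have c3: "h12 - m1 - M \<le> L0" using hM L1 by argo
  have "I + A + B - 2 * M \<le> L0 + e" using T L1 hA e by argo
  moreover have "(I + A + B - M) / 2 \<le> L0 + e" using T L1 hA e by argo
  moreover have "I + A + B / 2 - M \<le> L0 + e" using T c3 hB by argo
  moreover have "I + A / 2 + B - M \<le> L0 + e" using T c3 hA by argo
  ultimately show ?thesis using L0 by (simp only: max.bounded_iff) argo
qed

theorem theorem3:
  fixes p :: "'a::finite \<times> 'b::finite \<Rightarrow> real" and M :: real
  assumes "is_pmf2 p"
    and "M \<in> {0 .. M1 p} \<union> {H12 p - 2 * M1 p .. H12 p}"
  shows "R_GW p M = R_LB p M"
proof -
  note p = assms(1)
  define S where "S = {min (H1_given_U p K q) (H2_given_U p K q) / 2 | K q.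
                  is_cond_pmf K q \<and> markov p K q}"
  have M1S: "M1 p = Sup S" unfolding S_def M1_def ..
  have Sne: "S \<noteq> {}" using M1_nonempty[OF p] unfolding S_def by blast
  have Sbdd: "bdd_above S"
  proof (rule bdd_aboveI[of _ "H1 p / 2"])
    fix x assume "x \<in> S"
    then obtain K q where x: "x = min (H1_given_U p K q) (H2_given_U p K q) / 2" and q: "is_cond_pmf K q"
      unfolding S_def by blast
    have "H1_given_U p K q \<le> H1 p" using shannon_c[OF p q] unfolding H1_given_U_def by simp
    then show "x \<le> H1 p / 2" unfolding x by linarith
  qed
  define G where "G = {R_GW_U p M K q | K q.
      is_cond_pmf K q \<and> K \<le> card (UNIV::'a set) * card (UNIV::'b set) + 2}"
  have RGW: "R_GW p M = Inf G" unfolding G_def R_GW_def ..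
  have Gne: "G \<noteq> {}"
  proof -
    have "is_cond_pmf 1 (\<lambda>_ _ _. 1)" unfolding is_cond_pmf_def by simp
    then have "R_GW_U p M 1 (\<lambda>_ _ _. 1) \<in> G" unfolding G_def by force
    then show ?thesis by blast
  qed
  have Glb: "R_LB p M \<le> g" if "g \<in> G" for g
    using that LB[OF p] unfolding G_def by blast
  have Gbdd: "bdd_below G" using Glb by (rule bdd_belowI)
  have ge: "R_LB p M \<le> R_GW p M" unfolding RGW by (rule cInf_greatest[OF Gne Glb])
  have le: "R_GW p M \<le> R_LB p M + e" if e: "0 < e" for e
  proof -
    have "M1 p - e < Sup S" using e M1S by simp
    then obtain x where "x \<in> S" and x: "M1 p - e < x" using less_cSup_iff[OF Sne Sbdd] by blast
    then obtain K q where xd: "x = min (H1_given_U p K q) (H2_given_U p K q) / 2"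
      and q: "is_cond_pmf K q" and m: "markov p K q" unfolding S_def by blast
    obtain w a b where w: "\<forall>j. 0 \<le> w j" and a: "\<forall>j x. 0 \<le> a j x" and b: "\<forall>j y. 0 \<le> b j y"
      and sa: "\<forall>j<K. (\<Sum>x\<in>UNIV. a j x) = 1" and sb: "\<forall>j<K. (\<Sum>y\<in>UNIV. b j y) = 1"
      and P: "\<forall>x1 x2. (\<Sum>j<K. w j * a j x1 * b j x2) = p (x1,x2)"
      and HA: "H1_given_U p K q = (\<Sum>j<K. w j * ent (a j) UNIV)"
      and HB: "H2_given_U p K q = (\<Sum>j<K. w j * ent (b j) UNIV)"
      using markov_struct[OF p q m] by blast
    obtain K' w' a' b' where K': "0 < K'" "K' \<le> CARD('a) * CARD('b) + 2"
      and w': "\<forall>j. 0 \<le> w' j" and a': "\<forall>j x. 0 \<le> a' j x" and b': "\<forall>j y. 0 \<le> b' j y"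
      and sa': "\<forall>j<K'. (\<Sum>x\<in>UNIV. a' j x) = 1" and sb': "\<forall>j<K'. (\<Sum>y\<in>UNIV. b' j y) = 1"
      and P': "\<forall>x1 x2. (\<Sum>j<K'. w' j * a' j x1 * b' j x2) = p (x1,x2)"
      and HA': "(\<Sum>j<K'. w' j * ent (a' j) UNIV) = (\<Sum>j<K. w j * ent (a j) UNIV)"
      and HB': "(\<Sum>j<K'. w' j * ent (b' j) UNIV) = (\<Sum>j<K. w j * ent (b j) UNIV)"
      using reduce[OF p, of w a b K] w a b sa sb P by blast
    obtain q' where q': "is_cond_pmf K' q'"
      and HA'': "H1_given_U p K' q' = (\<Sum>j<K'. w' j * ent (a' j) UNIV)"
      and HB'': "H2_given_U p K' q' = (\<Sum>j<K'. w' j * ent (b' j) UNIV)"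
      and T: "I12_U p K' q' + H1_given_U p K' q' + H2_given_U p K' q' = H12 p"
      using build[OF p, of w' a' b' K'] w' a' b' sa' sb' K'(1) P' by blast
    have A1: "H1_given_U p K' q' = H1_given_U p K q" using HA'' HA' HA by simp
    have B1: "H2_given_U p K' q' = H2_given_U p K q" using HB'' HB' HB by simp
    have inG: "R_GW_U p M K' q' \<in> G" unfolding G_def using q' K'(2) by auto
    have hM: "M \<le> M1 p \<or> H12 p - 2 * M1 p \<le> M" using assms(2) by auto
    have "R_GW_U p M K' q' \<le> R_LB p M + e"
      unfolding R_GW_U_eq R_LB_eq Let_def
      by (rule ub_arith[OF T _ _ hM]) (use x xd A1 B1 e in auto)
    moreover have "R_GW p M \<le> R_GW_U p M K' q'" unfolding RGW by (rule cInf_lower[OF inG Gbdd])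
    ultimately show ?thesis by linarith
  qed
  have "R_GW p M \<le> R_LB p M" by (rule field_le_epsilon) (rule le)
  with ge show ?thesis by linarith
qed


end
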